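(* Let $u\equiv0$ and assume $\mathcal R_0<1$. Then $\mathbf 0\in\mathbb R^4$ is globally asymptotically stable in $\mathcal D'=[0,+\infty)^4$ for the system $$\dot E=\beta_E F\Big(1-\frac EK\Big)-(\nu_E+\delta_E)E,\quad \dot M=(1-\nu)\nu_E E-\delta_M M,\quad \dot F=\nu\nu_E E\frac{M}{M+\gamma_sM_s}-\delta_F F,\quad \dot M_s=u-\delta_sM_s.$$
   Context: Parameters: $\beta_E,\nu_E,\delta_E,\delta_M,\delta_F,\delta_s,K>0$, $\nu\in(0,1)$, $\gamma_s\in(0,1]$, and $\delta_s\ge\delta_M$. $\mathcal R_0:=\dfrac{\beta_E\nu\nu_E}{\delta_F(\nu_E+\delta_E)}$. State $z=(E,M,F,M_s)^T\in\mathcal D'$. For a feedback $u:\mathcal D'\to[0,+\infty)$ with $u\in L^\infty_{loc}(\mathcal D')$, write $X(z)$ for the right-hand side above with $u=u(z)$ (its value on the null set $\{M=M_s=0\}$ is irrelevant). Solutions are Filippov solutions: locally Lipschitz curves $z:I\to\mathcal D'$ ($I$ an interval) such that for a.e. $t\in I$, $\dot z(t)\in\bigcap_{\varepsilon>0}\bigcap_{N}\overline{\mathrm{conv}}\,X\big(((z(t)+\varepsilon B)\cap\mathcal D')\setminus N\big)$, where $B$ is the unit ball of $\mathbb R^4$, $N$ ranges over Lebesgue-null subsets of $\mathbb R^4$, and $\overline{\mathrm{conv}}$ denotes the closed convex hull. For $\mathcal S\subset\mathcal D'$, an equilibrium $z_e$ is stable in $\mathcal S$ if for every $\varepsilon>0$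 there is $\delta>0$ such that every Filippov solution with $z(0)\in\mathcal S$ and $\|z(0)-z_e\|<\delta$ satisfies $\|z(t)-z_e\|<\varepsilon$ for all $t>0$; it is a global attractor in $\mathcal S$ if every Filippov solution with $z(0)\in\mathcal S$ satisfies $z(t)\to z_e$; it is globally asymptotically stable in $\mathcal S$ if both hold. *)

theory Defs
  imports "HOL-Analysis.Analysis"
begin

text \<open>State z = (E, M, F, M_s) encoded as a vector in real^4 with
  z$1 = E, z$2 = M, z$3 = F, z$4 = M_s.\<close>

definition Dprime :: "(real^4) set" where
  "Dprime = {z. \<forall>i. 0 \<le> z $ i}"

text \<open>Right-hand side X(z) with feedback u = u(z).  The value on the null set
  {M = M_s = 0} (where Isabelle's division by zero gives 0) is irrelevant.\<close>
definition Xfield ::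
  "real \<Rightarrow> real \<Rightarrow> real \<Rightarrow> real \<Rightarrow> real \<Rightarrow> real \<Rightarrow> real \<Rightarrow> real \<Rightarrow> real
   \<Rightarrow> (real^4 \<Rightarrow> real) \<Rightarrow> real^4 \<Rightarrow> real^4" where
  "Xfield \<beta>E \<nu>E \<delta>E \<delta>M \<delta>F \<delta>s K \<nu> \<gamma>s u z =
     (\<chi> i. if i = 1 then \<beta>E * z$3 * (1 - z$1 / K) - (\<nu>E + \<delta>E) * z$1
           else if i = 2 then (1 - \<nu>) * \<nu>E * z$1 - \<delta>M * z$2
           else if i = 3 then \<nu> * \<nu>E * z$1 * (z$2 / (z$2 + \<gamma>s * z$4)) - \<delta>F * z$3
           else u z - \<delta>s * z$4)"

definition R0 :: "real \<Rightarrow> real \<Rightarrow> real \<Rightarrow> real \<Rightarrow> real \<Rightarrow> real" where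
  "R0 \<beta>E \<nu> \<nu>E \<delta>F \<delta>E = \<beta>E * \<nu> * \<nu>E / (\<delta>F * (\<nu>E + \<delta>E))"

definition filippov_map :: "('a::euclidean_space \<Rightarrow> 'a) \<Rightarrow> 'a set \<Rightarrow> 'a \<Rightarrow> 'a set" where
  "filippov_map X D z =
     (\<Inter>\<epsilon>\<in>{0<..}. \<Inter>N\<in>null_sets lebesgue.
        closure (convex hull (X ` ((cball z \<epsilon> \<inter> D) - N))))"

definition locally_lipschitz_on :: "real set \<Rightarrow> (real \<Rightarrow> 'a::metric_space) \<Rightarrow> bool" where
  "locally_lipschitz_on I z \<longleftrightarrow>
     (\<forall>t\<in>I. \<exists>\<delta>>0. \<exists>L. L-lipschitz_on (ball t \<delta> \<inter> I) z)"

definition filippov_solution ::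
  "('a::euclidean_space \<Rightarrow> 'a) \<Rightarrow> 'a set \<Rightarrow> real set \<Rightarrow> (real \<Rightarrow> 'a) \<Rightarrow> bool" where
  "filippov_solution X D I z \<longleftrightarrow>
     is_interval I \<and> (\<forall>t\<in>I. z t \<in> D) \<and> locally_lipschitz_on I z \<and>
     (AE t in lborel. t \<in> I \<longrightarrow>
        (\<exists>v. (z has_vector_derivative v) (at t within I) \<and> v \<in> filippov_map X D (z t)))"

definition stable_in ::
  "('a::euclidean_space \<Rightarrow> 'a) \<Rightarrow> 'a set \<Rightarrow> 'a set \<Rightarrow> 'a \<Rightarrow> bool" where
  "stable_in X D S ze \<longleftrightarrow>
     (\<forall>\<epsilon>>0. \<exists>\<delta>>0. \<forall>I z. filippov_solution X D I z \<and> 0 \<in> I \<and> z 0 \<in> S \<and>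
        norm (z 0 - ze) < \<delta> \<longrightarrow> (\<forall>t\<in>I. t > 0 \<longrightarrow> norm (z t - ze) < \<epsilon>))"

definition global_attractor_in ::
  "('a::euclidean_space \<Rightarrow> 'a) \<Rightarrow> 'a set \<Rightarrow> 'a set \<Rightarrow> 'a \<Rightarrow> bool" where
  "global_attractor_in X D S ze \<longleftrightarrow>
     (\<forall>I z. filippov_solution X D I z \<and> {0..} \<subseteq> I \<and> z 0 \<in> S \<longrightarrow>
        (z \<longlongrightarrow> ze) at_top)"

definition GAS_in ::
  "('a::euclidean_space \<Rightarrow> 'a) \<Rightarrow> 'a set \<Rightarrow> 'a set \<Rightarrow> 'a \<Rightarrow> bool" where
  "GAS_in X D S ze \<longleftrightarrow> stable_in X D S ze \<and> global_attractor_in X D S ze"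

end

theory Submission
  imports Defs
begin

lemma ptlip_continuous:
  fixes f :: "real \<Rightarrow> real"
  assumes lip: "\<And>t. t \<in> I \<Longrightarrow> \<exists>T B. open T \<and> t \<in> T \<and> (\<forall>y\<in>I\<inter>T. \<bar>f y - f t\<bar> \<le> B * \<bar>y - t\<bar>)"
  shows "continuous_on I f"
proof (unfold continuous_on_iff, intro ballI allI impI)
  fix x e :: real assume x: "x \<in> I" and e: "0 < e"
  obtain T B where T: "open T" "x \<in> T" and B: "\<forall>y\<in>I\<inter>T. \<bar>f y - f x\<bar> \<le> B * \<bar>y - x\<bar>"
    using lip[OF x] by blast
  obtain r where r: "r > 0" "ball x r \<subseteq> T" using T open_contains_ball by blast
  define d where "d = min r (e / (\<bar>B\<bar> + 1))"
  have d: "d > 0" using r e by (simp add: d_def)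
  show "\<exists>d>0. \<forall>x'\<in>I. dist x' x < d \<longrightarrow> dist (f x') (f x) < e"
  proof (intro exI conjI ballI impI)
    fix y assume y: "y \<in> I" "dist y x < d"
    have "y \<in> T" using r y by (auto simp: d_def dist_commute)
    then have "\<bar>f y - f x\<bar> \<le> B * \<bar>y - x\<bar>" using B y by auto
    also have "\<dots> \<le> \<bar>B\<bar> * \<bar>y - x\<bar>" by (simp add: mult_right_mono)
    also have "\<dots> \<le> \<bar>B\<bar> * d" using y by (intro mult_left_mono) (auto simp: dist_real_def)
    also have "\<dots> < e"
    proof -
      have "\<bar>B\<bar> * d \<le> \<bar>B\<bar> * (e / (\<bar>B\<bar> + 1))" by (intro mult_left_mono) (auto simp: d_def)
      also have "\<dots> < e" using e by (simp add: field_simps)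
      finally show ?thesis .
    qed
    finally show "dist (f y) (f x) < e" by (simp add: dist_real_def)
  qed (rule d)
qed

lemma mono_ae:
  fixes f :: "real \<Rightarrow> real"
  assumes I: "is_interval I"
  and lip: "\<And>t. t \<in> I \<Longrightarrow> \<exists>T B. open T \<and> t \<in> T \<and> (\<forall>y\<in>I\<inter>T. \<bar>f y - f t\<bar> \<le> B * \<bar>y - t\<bar>)"
  and der: "AE t in lborel. t \<in> I \<longrightarrow> (\<exists>D. (f has_real_derivative D) (at t within I) \<and> D \<le> 0)"
  and ab: "a \<in> I" "b \<in> I" "a \<le> b"
  shows "f b \<le> f a"
proof (rule ccontr)
  assume "\<not> f b \<le> f a"
  hence fab: "f a < f b" by simp
  hence "a < b" using ab by (cases "a = b") auto
  have sub: "{a..b} \<subseteq> I" using I ab by (meson atLeastAtMost_iff is_interval_1 subsetI)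
  define \<eta> where "\<eta> = (f b - f a) / (2 * (b - a))"
  have eta: "\<eta> > 0" using fab \<open>a < b\<close> by (simp add: \<eta>_def)
  define h where "h t = f t - \<eta> * t" for t
  have "\<eta> * (b - a) = (f b - f a) / 2" using \<open>a < b\<close> by (simp add: \<eta>_def field_simps)
  hence hab: "h a < h b" using fab by (simp add: h_def algebra_simps)
  define N where "N = {t \<in> {a..b}. \<not> (\<exists>D. (f has_real_derivative D) (at t within I) \<and> D \<le> 0)}"
  obtain N0 where N0: "N0 \<in> null_sets lborel" "{t. \<not> (t \<in> I \<longrightarrow> (\<exists>D. (f has_real_derivative D) (at t within I) \<and> D \<le> 0))} \<subseteq> N0"
    using der by (rule AE_E) (auto simp: null_sets_def)
  have "N \<subseteq> N0" using N0(2) sub by (auto simp: N_def)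
  hence negN: "negligible N"
    using N0(1) by (metis negligible_iff_null_sets negligible_subset null_sets_completionI)
  have "negligible (h ` N)"
  proof (rule negligible_locally_Lipschitz_image)
    show "DIM(real) \<le> DIM(real)" by simp
    show "negligible N" by (rule negN)
    fix x assume "x \<in> N"
    hence xI: "x \<in> I" using sub by (auto simp: N_def)
    obtain T B where T: "open T" "x \<in> T" and B: "\<forall>y\<in>I\<inter>T. \<bar>f y - f x\<bar> \<le> B * \<bar>y - x\<bar>"
      using lip[OF xI] by blast
    show "\<exists>T B. open T \<and> x \<in> T \<and> (\<forall>y\<in>N \<inter> T. norm (h y - h x) \<le> B * norm (y - x))"
    proof (intro exI conjI ballI)
      fix y assume y: "y \<in> N \<inter> T"
      hence yI: "y \<in> I" using sub by (auto simp: N_def)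
      have "\<bar>h y - h x\<bar> \<le> \<bar>f y - f x\<bar> + \<eta> * \<bar>y - x\<bar>"
      proof -
        have eq: "h y - h x = (f y - f x) - \<eta> * (y - x)" by (simp add: h_def algebra_simps)
        show ?thesis unfolding eq using abs_triangle_ineq4[of "f y - f x" "\<eta> * (y - x)"] eta
          by (simp add: abs_mult)
      qed
      also have "\<dots> \<le> (B + \<eta>) * \<bar>y - x\<bar>"
      proof -
        have "\<bar>f y - f x\<bar> \<le> B * \<bar>y - x\<bar>" using B y yI by blast
        thus ?thesis by (simp add: distrib_right)
      qed
      finally show "norm (h y - h x) \<le> (B + \<eta>) * norm (y - x)" by simp
    qed (use T in auto)
  qed
  moreover have "{h a<..<h b} \<subseteq> h ` N"
  proof
    fix y assume y: "y \<in> {h a<..<h b}"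
    have contf: "continuous_on I f" by (rule ptlip_continuous[OF lip])
    have conth: "continuous_on {a..b} h"
      unfolding h_def by (intro continuous_intros continuous_on_subset[OF contf sub])
    define S where "S = {t \<in> {a..b}. h t = y}"
    have "\<exists>x\<ge>a. x \<le> b \<and> h x = y"
      using y \<open>a < b\<close> conth by (intro IVT') (auto simp: less_imp_le)
    hence Sne: "S \<noteq> {}" by (auto simp: S_def)
    have Scl: "closed S"
      unfolding S_def using conth continuous_closed_preimage_constant[OF conth closed_atLeastAtMost]
      by simp
    have Sbd: "bdd_above S" by (auto simp: S_def bdd_above_def)
    define t0 where "t0 = Sup S"
    have t0S: "t0 \<in> S" using closed_contains_Sup[OF Sne Sbd Scl] by (simp add: t0_def)
    have ub: "\<And>s. s \<in> S \<Longrightarrow> s \<le> t0" using Sbd by (simp add: cSup_upper t0_def)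
    have t0b: "t0 < b"
    proof -
      have "t0 \<le> b" "h t0 = y" using t0S by (auto simp: S_def)
      thus ?thesis using y by (cases "t0 = b") auto
    qed
    have after: "h s > y" if s: "t0 < s" "s \<le> b" for s
    proof (rule ccontr)
      assume "\<not> h s > y"
      hence "h s \<le> y" by simp
      moreover have "continuous_on {s..b} h" using conth s t0S by (auto simp: S_def intro: continuous_on_subset)
      ultimately have "\<exists>x\<ge>s. x \<le> b \<and> h x = y" using y s by (intro IVT') (auto simp: less_imp_le)
      then obtain x where "s \<le> x" "x \<le> b" "h x = y" by blast
      hence "x \<in> S" using s t0S by (auto simp: S_def)
      hence "x \<le> t0" by (rule ub)
      thus False using \<open>s \<le> x\<close> s(1) by linarith
    qed
    have "t0 \<in> N"
    proof (rule ccontr)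
      assume "t0 \<notin> N"
      then obtain D where D: "(f has_real_derivative D) (at t0 within I)" "D \<le> 0"
        using t0S by (auto simp: N_def S_def)
      have "(h has_real_derivative D - \<eta>) (at t0 within I)"
        unfolding h_def using D(1) by (auto intro!: derivative_eq_intros)
      then obtain d where d: "d > 0" "\<And>e. e > 0 \<Longrightarrow> t0 + e \<in> I \<Longrightarrow> e < d \<Longrightarrow> h t0 > h (t0 + e)"
        using has_real_derivative_neg_dec_right[of h "D - \<eta>" t0 I] D eta by auto
      define e where "e = min (d/2) (b - t0)"
      have e: "e > 0" "e < d" "t0 + e \<le> b" using d t0b by (auto simp: e_def)
      have "t0 + e \<in> I" using sub e t0S by (auto simp: S_def)
      hence "h t0 > h (t0 + e)" using d e by auto
      moreover have "h (t0 + e) > y" using after e by auto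
      ultimately show False using t0S by (auto simp: S_def)
    qed
    thus "y \<in> h ` N" using t0S by (auto simp: S_def)
  qed
  ultimately have "negligible {h a<..<h b}" by (rule negligible_subset)
  hence "negligible (box (h a) (h b))" by (simp only: box_real(1))
  hence "box (h a) (h b) = {}" by (simp only: negligible_interval)
  thus False using hab by (simp add: box_eq_empty)
qed

definition cv :: "real \<Rightarrow> real \<Rightarrow> real^4" where
  "cv c2 c3 = (\<chi> i. if i = 1 then 1 else if i = 2 then c2 else if i = 3 then c3 else 1)"

lemma inner_cv: "inner (cv c2 c3) w = w$1 + c2 * w$2 + c3 * w$3 + w$4"
  by (simp add: cv_def inner_vec_def sum_4)

lemma arith_bound:
  fixes \<beta>E \<nu>E \<delta>E \<delta>M \<delta>F \<delta>s K \<nu> E M F S \<theta> :: real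
  assumes "\<beta>E > 0" "\<nu>E > 0" "\<delta>E > 0" "\<delta>M > 0" "\<delta>F > 0" "\<delta>s > 0" "K > 0"
    and "0 < \<nu>" "\<nu> < 1"
    and R: "\<beta>E * \<nu> * \<nu>E < \<delta>F * (\<nu>E + \<delta>E)"
    and c3: "c3 = (\<beta>E / \<delta>F + (\<nu>E + \<delta>E) / (\<nu> * \<nu>E)) / 2"
    and c2: "c2 = ((\<nu>E + \<delta>E) - c3 * \<nu> * \<nu>E) / (2 * ((1 - \<nu>) * \<nu>E))"
    and lam: "lm = min (min (((\<nu>E + \<delta>E) - c3 * \<nu> * \<nu>E) / 2) \<delta>M) (min ((c3 * \<delta>F - \<beta>E) / c3) \<delta>s)"
    and pos: "E \<ge> 0" "M \<ge> 0" "F \<ge> 0" "S \<ge> 0" "0 \<le> \<theta>" "\<theta> \<le> 1"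
  shows "c2 > 0" "c3 > 0" "lm > 0"
    "(\<beta>E * F * (1 - E / K) - (\<nu>E + \<delta>E) * E) + c2 * ((1 - \<nu>) * \<nu>E * E - \<delta>M * M)
      + c3 * (\<nu> * \<nu>E * E * \<theta> - \<delta>F * F) + (0 - \<delta>s * S)
     \<le> - lm * (E + c2 * M + c3 * F + S)"
proof -
  define a where "a = \<nu>E + \<delta>E"
  have a: "a > 0" using assms by (simp add: a_def)
  have nn: "\<nu> * \<nu>E > 0" using assms by simp
  have ineq: "\<beta>E / \<delta>F < a / (\<nu> * \<nu>E)"
    using R assms nn by (simp add: a_def divide_simps) (simp add: algebra_simps)
  have c3a: "c3 * (\<nu> * \<nu>E) < a"
  proof -
    have "c3 < a / (\<nu> * \<nu>E)" using ineq c3 by (simp add: a_def)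
    thus ?thesis using nn by (simp add: pos_less_divide_eq)
  qed
  have c3b: "\<beta>E < c3 * \<delta>F"
  proof -
    have "\<beta>E / \<delta>F < c3" using ineq c3 by (simp add: a_def)
    thus ?thesis using \<open>\<delta>F > 0\<close> by (simp add: pos_divide_less_eq)
  qed
  show c3p: "c3 > 0" using c3b assms by (smt (verit) mult_nonpos_nonneg)
  have g: "a - c3 * \<nu> * \<nu>E > 0" using c3a by (simp add: mult.assoc)
  have "2 * ((1 - \<nu>) * \<nu>E) > 0" using \<open>\<nu> < 1\<close> \<open>\<nu>E > 0\<close> by simp
  thus c2p: "c2 > 0" unfolding c2 using g by (simp add: a_def)
  have l1: "lm \<le> (a - c3 * \<nu> * \<nu>E) / 2" "lm \<le> \<delta>M" "lm \<le> (c3 * \<delta>F - \<beta>E) / c3" "lm \<le> \<delta>s"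
    unfolding lam a_def by (simp_all only: min_le_iff_disj order_refl simp_thms)
  have "(c3 * \<delta>F - \<beta>E) / c3 > 0" using c3b c3p by simp
  thus "lm > 0" unfolding lam using g \<open>\<delta>M > 0\<close> \<open>\<delta>s > 0\<close> by (simp add: a_def)
  have T1: "\<beta>E * F * (1 - E / K) \<le> \<beta>E * F"
  proof -
    have "E / K \<ge> 0" using pos assms by simp
    hence "\<beta>E * F * (1 - E / K) = \<beta>E * F - \<beta>E * F * (E / K)" by (simp add: algebra_simps)
    moreover have "\<beta>E * F * (E / K) \<ge> 0" using pos assms \<open>E / K \<ge> 0\<close> by simp
    ultimately show ?thesis by linarith
  qed
  have T2: "c3 * (\<nu> * \<nu>E * E * \<theta>) \<le> c3 * (\<nu> * \<nu>E * E)"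
    using c3p nn pos by (intro mult_left_mono) (auto intro: mult_right_le_one_le)
  have eqE: "- a + c2 * ((1 - \<nu>) * \<nu>E) + c3 * (\<nu> * \<nu>E) = - (a - c3 * \<nu> * \<nu>E) / 2"
  proof -
    have nz: "(1 - \<nu>) * \<nu>E \<noteq> 0" using \<open>\<nu> < 1\<close> \<open>\<nu>E > 0\<close> by simp
    have "c2 * ((1 - \<nu>) * \<nu>E) = (a - c3 * \<nu> * \<nu>E) / 2"
      unfolding c2 a_def using nz by simp
    thus ?thesis by (simp add: algebra_simps)
  qed
  have bE: "E * (- a + c2 * ((1 - \<nu>) * \<nu>E) + c3 * (\<nu> * \<nu>E)) \<le> - lm * E"
  proof -
    have "- (a - c3 * \<nu> * \<nu>E) / 2 \<le> - lm" using l1(1) by linarith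
    hence "E * (- (a - c3 * \<nu> * \<nu>E) / 2) \<le> E * (- lm)" using pos(1) by (rule mult_left_mono)
    thus ?thesis unfolding eqE by (simp add: mult.commute)
  qed
  have bM: "M * (- c2 * \<delta>M) \<le> - lm * (c2 * M)"
  proof -
    have "c2 * M * lm \<le> c2 * M * \<delta>M" using l1(2) c2p pos(2) by (intro mult_left_mono) auto
    thus ?thesis by (simp add: algebra_simps)
  qed
  have bF0: "\<beta>E - c3 * \<delta>F \<le> - lm * c3"
  proof -
    have "lm * c3 \<le> (c3 * \<delta>F - \<beta>E)" using l1(3) c3p by (simp add: pos_le_divide_eq)
    thus ?thesis by linarith
  qed
  have bF: "F * (\<beta>E - c3 * \<delta>F) \<le> - lm * (c3 * F)"
  proof -
    have "F * (\<beta>E - c3 * \<delta>F) \<le> F * (- lm * c3)" using bF0 pos(3) by (rule mult_left_mono)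
    thus ?thesis by (simp add: algebra_simps)
  qed
  have bS: "S * (- \<delta>s) \<le> - lm * S"
  proof -
    have "S * (- \<delta>s) \<le> S * (- lm)" using l1(4) pos(4) by (intro mult_left_mono) auto
    thus ?thesis by (simp add: algebra_simps)
  qed
  have "(\<beta>E * F * (1 - E / K) - a * E) + c2 * ((1 - \<nu>) * \<nu>E * E - \<delta>M * M)
      + c3 * (\<nu> * \<nu>E * E * \<theta> - \<delta>F * F) + (0 - \<delta>s * S)
     \<le> (\<beta>E * F - a * E) + c2 * ((1 - \<nu>) * \<nu>E * E - \<delta>M * M)
      + c3 * (\<nu> * \<nu>E * E - \<delta>F * F) + (0 - \<delta>s * S)"
    using T1 T2 by (simp add: algebra_simps)
  also have "\<dots> = E * (- a + c2 * ((1 - \<nu>) * \<nu>E) + c3 * (\<nu> * \<nu>E)) + M * (- c2 * \<delta>M)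
       + F * (\<beta>E - c3 * \<delta>F) + S * (- \<delta>s)"
    by (simp add: algebra_simps)
  also have "\<dots> \<le> - lm * E + - lm * (c2 * M) + - lm * (c3 * F) + - lm * S"
    using bE bM bF bS by linarith
  also have "\<dots> = - lm * (E + c2 * M + c3 * F + S)" by (simp add: algebra_simps)
  finally show "(\<beta>E * F * (1 - E / K) - (\<nu>E + \<delta>E) * E) + c2 * ((1 - \<nu>) * \<nu>E * E - \<delta>M * M)
      + c3 * (\<nu> * \<nu>E * E * \<theta> - \<delta>F * F) + (0 - \<delta>s * S)
     \<le> - lm * (E + c2 * M + c3 * F + S)" by (simp add: a_def)
qed


lemma field_bound:
  fixes \<beta>E \<nu>E \<delta>E \<delta>M \<delta>F \<delta>s K \<nu> \<gamma>s :: real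
  assumes "\<beta>E > 0" "\<nu>E > 0" "\<delta>E > 0" "\<delta>M > 0" "\<delta>F > 0" "\<delta>s > 0" "K > 0"
    and "0 < \<nu>" "\<nu> < 1" and "0 < \<gamma>s"
    and R0: "R0 \<beta>E \<nu> \<nu>E \<delta>F \<delta>E < 1"
  obtains c2 c3 lm where "c2 > 0" "c3 > 0" "lm > 0"
    "\<And>w. w \<in> Dprime \<Longrightarrow> inner (cv c2 c3) (Xfield \<beta>E \<nu>E \<delta>E \<delta>M \<delta>F \<delta>s K \<nu> \<gamma>s (\<lambda>_. 0) w)
        \<le> - lm * inner (cv c2 c3) w"
proof -
  have den: "\<delta>F * (\<nu>E + \<delta>E) > 0" using assms by simp
  have R: "\<beta>E * \<nu> * \<nu>E < \<delta>F * (\<nu>E + \<delta>E)"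
    using R0 den by (simp add: R0_def divide_less_eq)
  define c3 where "c3 = (\<beta>E / \<delta>F + (\<nu>E + \<delta>E) / (\<nu> * \<nu>E)) / 2"
  define c2 where "c2 = ((\<nu>E + \<delta>E) - c3 * \<nu> * \<nu>E) / (2 * ((1 - \<nu>) * \<nu>E))"
  define lm where "lm = min (min (((\<nu>E + \<delta>E) - c3 * \<nu> * \<nu>E) / 2) \<delta>M) (min ((c3 * \<delta>F - \<beta>E) / c3) \<delta>s)"
  note AB = arith_bound[OF assms(1-9) R c3_def c2_def lm_def]
  show ?thesis
  proof (rule that[of c2 c3 lm])
    show "c2 > 0" "c3 > 0" "lm > 0" using AB[of 0 0 0 0 0] by auto
    fix w :: "real^4" assume w: "w \<in> Dprime"
    have nn: "0 \<le> w$1" "0 \<le> w$2" "0 \<le> w$3" "0 \<le> w$4" using w by (auto simp: Dprime_def)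
    define \<theta> where "\<theta> = w$2 / (w$2 + \<gamma>s * w$4)"
    have th: "0 \<le> \<theta>" "\<theta> \<le> 1"
    proof -
      have g: "0 \<le> \<gamma>s * w$4" using nn \<open>0 < \<gamma>s\<close> by simp
      show "0 \<le> \<theta>" using nn g by (simp add: \<theta>_def)
      show "\<theta> \<le> 1"
      proof (cases "w$2 + \<gamma>s * w$4 = 0")
        case True thus ?thesis by (simp add: \<theta>_def)
      next
        case False
        hence "w$2 + \<gamma>s * w$4 > 0" using nn g by linarith
        thus ?thesis using g by (simp add: \<theta>_def divide_le_eq)
      qed
    qed
    have X: "Xfield \<beta>E \<nu>E \<delta>E \<delta>M \<delta>F \<delta>s K \<nu> \<gamma>s (\<lambda>_. 0) w $ 1 = \<beta>E * w$3 * (1 - w$1 / K) - (\<nu>E + \<delta>E) * w$1"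
      "Xfield \<beta>E \<nu>E \<delta>E \<delta>M \<delta>F \<delta>s K \<nu> \<gamma>s (\<lambda>_. 0) w $ 2 = (1 - \<nu>) * \<nu>E * w$1 - \<delta>M * w$2"
      "Xfield \<beta>E \<nu>E \<delta>E \<delta>M \<delta>F \<delta>s K \<nu> \<gamma>s (\<lambda>_. 0) w $ 3 = \<nu> * \<nu>E * w$1 * \<theta> - \<delta>F * w$3"
      "Xfield \<beta>E \<nu>E \<delta>E \<delta>M \<delta>F \<delta>s K \<nu> \<gamma>s (\<lambda>_. 0) w $ 4 = 0 - \<delta>s * w$4"
      by (simp_all add: Xfield_def \<theta>_def)
    show "inner (cv c2 c3) (Xfield \<beta>E \<nu>E \<delta>E \<delta>M \<delta>F \<delta>s K \<nu> \<gamma>s (\<lambda>_. 0) w) \<le> - lm * inner (cv c2 c3) w"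
      unfolding inner_cv X using AB(4)[OF nn(1) nn(2) nn(3) nn(4) th] by simp
  qed
qed

lemma filippov_bound:
  fixes c :: "real^4"
  assumes X: "\<And>w. w \<in> D \<Longrightarrow> inner c (X w) \<le> - lm * inner c w" and lm: "lm \<ge> 0"
    and v: "v \<in> filippov_map X D z"
  shows "inner c v \<le> - lm * inner c z"
proof (rule field_le_epsilon)
  fix e :: real assume e: "e > 0"
  define \<epsilon> where "\<epsilon> = e / (lm * norm c + 1)"
  have pos: "lm * norm c + 1 > 0" using lm by (simp add: add_nonneg_pos)
  have eps: "\<epsilon> > 0" using e pos by (simp add: \<epsilon>_def)
  have bnd: "lm * norm c * \<epsilon> \<le> e"
  proof -
    have "lm * norm c * \<epsilon> \<le> (lm * norm c + 1) * \<epsilon>" using eps by (intro mult_right_mono) auto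
    also have "\<dots> = e" using pos by (simp add: \<epsilon>_def)
    finally show ?thesis .
  qed
  define H where "H = {x. inner c x \<le> - lm * inner c z + lm * norm c * \<epsilon>}"
  have "v \<in> closure (convex hull (X ` ((cball z \<epsilon> \<inter> D) - {})))"
    using v eps unfolding filippov_map_def by blast
  moreover have "closure (convex hull (X ` ((cball z \<epsilon> \<inter> D) - {}))) \<subseteq> H"
  proof (rule closure_minimal)
    show "closed H" unfolding H_def by (rule closed_halfspace_le)
    show "convex hull (X ` ((cball z \<epsilon> \<inter> D) - {})) \<subseteq> H"
    proof (rule hull_minimal)
      show "convex H" unfolding H_def by (rule convex_halfspace_le)
      show "X ` ((cball z \<epsilon> \<inter> D) - {}) \<subseteq> H"
      proof
        fix x assume "x \<in> X ` ((cball z \<epsilon> \<inter> D) - {})"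
        then obtain w where w: "w \<in> cball z \<epsilon>" "w \<in> D" and x: "x = X w" by auto
        have "inner c z - inner c w = inner c (z - w)" by (simp add: inner_diff_right)
        also have "\<dots> \<le> norm c * norm (z - w)" by (rule norm_cauchy_schwarz)
        also have "\<dots> \<le> norm c * \<epsilon>" using w(1) by (intro mult_left_mono) (auto simp: dist_norm)
        finally have "inner c z - inner c w \<le> norm c * \<epsilon>" .
        hence "lm * (inner c z - inner c w) \<le> lm * (norm c * \<epsilon>)" using lm by (rule mult_left_mono)
        hence "- lm * inner c w \<le> - lm * inner c z + lm * norm c * \<epsilon>" by (simp add: algebra_simps)
        thus "x \<in> H" using X[OF w(2)] unfolding H_def x by simp
      qed
    qed
  qed
  ultimately have "v \<in> H" by blast
  thus "inner c v \<le> - lm * inner c z + e" using bnd unfolding H_def by simp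
qed

lemma sol_mono:
  fixes c :: "real^4"
  assumes sol: "filippov_solution X D I z"
    and fb: "\<And>z v. z \<in> D \<Longrightarrow> v \<in> filippov_map X D z \<Longrightarrow> inner c v \<le> - lm * inner c z"
    and J: "is_interval J" "J \<subseteq> I" and k: "\<And>t. t \<in> J \<Longrightarrow> k \<le> lm * inner c (z t)"
    and ab: "a \<in> J" "b \<in> J" "a \<le> b"
  shows "inner c (z b) + k * b \<le> inner c (z a) + k * a"
proof (rule mono_ae[where f = "\<lambda>t. inner c (z t) + k * t", OF J(1) _ _ ab])
  have ll: "locally_lipschitz_on I z" and zD: "\<And>t. t \<in> I \<Longrightarrow> z t \<in> D"
    and ae: "AE t in lborel. t \<in> I \<longrightarrow>
        (\<exists>v. (z has_vector_derivative v) (at t within I) \<and> v \<in> filippov_map X D (z t))"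
    using sol unfolding filippov_solution_def by auto
  fix t assume tJ: "t \<in> J"
  hence tI: "t \<in> I" using J by auto
  obtain \<delta> L where d: "\<delta> > 0" and L: "L-lipschitz_on (ball t \<delta> \<inter> I) z"
    using ll tI unfolding locally_lipschitz_on_def by blast
  have L0: "L \<ge> 0" using L by (rule lipschitz_on_nonneg)
  show "\<exists>T B. open T \<and> t \<in> T \<and> (\<forall>y\<in>J \<inter> T. \<bar>(inner c (z y) + k * y) - (inner c (z t) + k * t)\<bar> \<le> B * \<bar>y - t\<bar>)"
  proof (intro exI conjI ballI)
    fix y assume y: "y \<in> J \<inter> ball t \<delta>"
    hence yb: "y \<in> ball t \<delta> \<inter> I" using J by auto
    have tb: "t \<in> ball t \<delta> \<inter> I" using d tI by auto
    have dz: "dist (z y) (z t) \<le> L * dist y t" using lipschitz_onD[OF L yb tb] .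
    have "\<bar>(inner c (z y) + k * y) - (inner c (z t) + k * t)\<bar> = \<bar>inner c (z y - z t) + k * (y - t)\<bar>"
      by (simp add: inner_diff_right algebra_simps)
    also have "\<dots> \<le> \<bar>inner c (z y - z t)\<bar> + \<bar>k * (y - t)\<bar>" by (rule abs_triangle_ineq)
    also have "\<bar>inner c (z y - z t)\<bar> \<le> norm c * norm (z y - z t)" by (rule Cauchy_Schwarz_ineq2)
    also have "norm c * norm (z y - z t) \<le> norm c * (L * \<bar>y - t\<bar>)"
      using dz by (intro mult_left_mono) (auto simp: dist_norm dist_real_def)
    finally have "\<bar>(inner c (z y) + k * y) - (inner c (z t) + k * t)\<bar> \<le> norm c * (L * \<bar>y - t\<bar>) + \<bar>k * (y - t)\<bar>"
      by simp
    also have "norm c * (L * \<bar>y - t\<bar>) + \<bar>k * (y - t)\<bar> = (norm c * L + \<bar>k\<bar>) * \<bar>y - t\<bar>"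
      by (simp only: abs_mult) (simp add: algebra_simps)
    finally show "\<bar>(inner c (z y) + k * y) - (inner c (z t) + k * t)\<bar> \<le> (norm c * L + \<bar>k\<bar>) * \<bar>y - t\<bar>" .
  qed (use d in auto)
next
  have zD: "\<And>t. t \<in> I \<Longrightarrow> z t \<in> D"
    and ae: "AE t in lborel. t \<in> I \<longrightarrow>
        (\<exists>v. (z has_vector_derivative v) (at t within I) \<and> v \<in> filippov_map X D (z t))"
    using sol unfolding filippov_solution_def by auto
  show "AE t in lborel. t \<in> J \<longrightarrow> (\<exists>Dv. ((\<lambda>t. inner c (z t) + k * t) has_real_derivative Dv) (at t within J) \<and> Dv \<le> 0)"
    using ae
  proof (rule AE_mp, intro AE_I2 impI)
    fix t assume H: "t \<in> I \<longrightarrow> (\<exists>v. (z has_vector_derivative v) (at t within I) \<and> v \<in> filippov_map X D (z t))"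
      and tJ: "t \<in> J"
    hence tI: "t \<in> I" using J by auto
    then obtain v where v: "(z has_vector_derivative v) (at t within I)" "v \<in> filippov_map X D (z t)"
      using H by blast
    have vJ: "(z has_vector_derivative v) (at t within J)"
      using v(1) J(2) by (rule has_vector_derivative_within_subset)
    have "((\<lambda>x. inner c (z x)) has_vector_derivative inner c v) (at t within J)"
      using bounded_linear.has_vector_derivative[OF bounded_linear_inner_right vJ] .
    hence d1: "((\<lambda>x. inner c (z x)) has_real_derivative inner c v) (at t within J)"
      by (simp add: has_real_derivative_iff_has_vector_derivative)
    have d2: "((\<lambda>x. inner c (z x) + k * x) has_real_derivative inner c v + k) (at t within J)"
      using d1 by (auto intro!: derivative_eq_intros)
    have "inner c v \<le> - lm * inner c (z t)" using fb[OF zD[OF tI] v(2)] .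
    moreover have "k \<le> lm * inner c (z t)" using k tJ by blast
    ultimately have "inner c v + k \<le> 0" by linarith
    thus "\<exists>Dv. ((\<lambda>t. inner c (z t) + k * t) has_real_derivative Dv) (at t within J) \<and> Dv \<le> 0"
      using d2 by blast
  qed
qed


theorem theorem2:
  fixes \<beta>E \<nu>E \<delta>E \<delta>M \<delta>F \<delta>s K \<nu> \<gamma>s :: real
  assumes "\<beta>E > 0" "\<nu>E > 0" "\<delta>E > 0" "\<delta>M > 0" "\<delta>F > 0" "\<delta>s > 0" "K > 0"
    and "0 < \<nu>" "\<nu> < 1" and "0 < \<gamma>s" "\<gamma>s \<le> 1" and "\<delta>s \<ge> \<delta>M"
    and "R0 \<beta>E \<nu> \<nu>E \<delta>F \<delta>E < 1"
  shows "GAS_in (Xfield \<beta>E \<nu>E \<delta>E \<delta>M \<delta>F \<delta>s K \<nu> \<gamma>s (\<lambda>_. 0)) Dprime Dprime 0"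
proof -
  let ?X = "Xfield \<beta>E \<nu>E \<delta>E \<delta>M \<delta>F \<delta>s K \<nu> \<gamma>s (\<lambda>_. 0)"
  obtain c2 c3 lm where c2: "c2 > 0" and c3: "c3 > 0" and lm: "lm > 0"
    and XB: "\<And>w. w \<in> Dprime \<Longrightarrow> inner (cv c2 c3) (?X w) \<le> - lm * inner (cv c2 c3) w"
    using field_bound[OF assms(1-10) assms(13)] by blast
  define c where "c = cv c2 c3"
  have fb: "\<And>z v. z \<in> Dprime \<Longrightarrow> v \<in> filippov_map ?X Dprime z \<Longrightarrow> inner c v \<le> - lm * inner c z"
    unfolding c_def by (rule filippov_bound[OF XB]) (use lm in auto)
  define cm where "cm = min (min 1 c2) c3"
  have cm: "cm > 0" using c2 c3 by (simp add: cm_def)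
  have Wnn: "inner c w \<ge> 0" if "w \<in> Dprime" for w
    using that c2 c3 by (auto simp: c_def inner_cv Dprime_def intro!: add_nonneg_nonneg)
  have Wlow: "cm * norm w \<le> inner c w" if w: "w \<in> Dprime" for w
  proof -
    have nn: "0 \<le> w$1" "0 \<le> w$2" "0 \<le> w$3" "0 \<le> w$4" using w by (auto simp: Dprime_def)
    have "norm w \<le> w$1 + w$2 + w$3 + w$4" using norm_le_l1_cart[of w] nn by (simp add: sum_4)
    hence "cm * norm w \<le> cm * (w$1 + w$2 + w$3 + w$4)" using cm by (intro mult_left_mono) auto
    also have "\<dots> = cm * w$1 + cm * w$2 + cm * w$3 + cm * w$4" by (simp add: algebra_simps)
    also have "\<dots> \<le> w$1 + c2 * w$2 + c3 * w$3 + w$4"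
    proof -
      have "cm * w$1 \<le> 1 * w$1" using nn by (intro mult_right_mono) (auto simp: cm_def)
      moreover have "cm * w$2 \<le> c2 * w$2" using nn by (intro mult_right_mono) (auto simp: cm_def)
      moreover have "cm * w$3 \<le> c3 * w$3" using nn by (intro mult_right_mono) (auto simp: cm_def)
      moreover have "cm * w$4 \<le> 1 * w$4" using nn by (intro mult_right_mono) (auto simp: cm_def)
      ultimately show ?thesis by linarith
    qed
    finally show ?thesis by (simp add: c_def inner_cv)
  qed
  have Wup: "inner c w \<le> norm c * norm w" for w by (rule norm_cauchy_schwarz)
  have nonincr: "inner c (z b) \<le> inner c (z a)"
    if sol: "filippov_solution ?X Dprime I z" and ab: "a \<in> I" "b \<in> I" "a \<le> b" for I z a b
  proof -
    have "is_interval I" and zD: "\<And>t. t \<in> I \<Longrightarrow> z t \<in> Dprime" using sol by (auto simp: filippov_solution_def)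
    have "inner c (z b) + 0 * b \<le> inner c (z a) + 0 * a"
      by (rule sol_mono[OF sol fb \<open>is_interval I\<close> order_refl _ ab])
         (use lm Wnn zD in auto)
    thus ?thesis by simp
  qed
  show ?thesis
    unfolding GAS_in_def
  proof
    show "stable_in ?X Dprime Dprime 0"
      unfolding stable_in_def
    proof (intro allI impI)
      fix \<epsilon> :: real assume e: "\<epsilon> > 0"
      define \<delta> where "\<delta> = \<epsilon> * cm / (norm c + 1)"
      have d: "\<delta> > 0" using e cm by (simp add: \<delta>_def add_nonneg_pos)
      show "\<exists>\<delta>>0. \<forall>I z. filippov_solution ?X Dprime I z \<and> 0 \<in> I \<and> z 0 \<in> Dprime \<and> norm (z 0 - 0) < \<delta>
            \<longrightarrow> (\<forall>t\<in>I. t > 0 \<longrightarrow> norm (z t - 0) < \<epsilon>)"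
      proof (intro exI conjI allI impI ballI)
        fix I z t assume H: "filippov_solution ?X Dprime I z \<and> 0 \<in> I \<and> z 0 \<in> Dprime \<and> norm (z 0 - 0) < \<delta>"
          and t: "t \<in> I" "t > 0"
        have zt: "z t \<in> Dprime" using H t by (auto simp: filippov_solution_def)
        have "cm * norm (z t) \<le> inner c (z t)" by (rule Wlow[OF zt])
        also have "\<dots> \<le> inner c (z 0)" using nonincr[of I z 0 t] H t by auto
        also have "\<dots> \<le> norm c * norm (z 0)" by (rule Wup)
        also have "\<dots> \<le> norm c * \<delta>" using H by (intro mult_left_mono) auto
        also have "\<dots> < \<epsilon> * cm"
        proof -
          have "norm c * \<delta> \<le> (norm c + 1) * \<delta>" using d by (intro mult_right_mono) auto
          also have "\<dots> = \<epsilon> * cm"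
          proof -
            have "norm c + 1 > 0" by (simp add: add_nonneg_pos)
            thus ?thesis by (simp add: \<delta>_def)
          qed
          finally have "norm c * \<delta> \<le> \<epsilon> * cm" .
          moreover have "norm c * \<delta> \<noteq> \<epsilon> * cm \<or> norm c * \<delta> < \<epsilon> * cm"
          proof -
            have "norm c * \<delta> < (norm c + 1) * \<delta>" using d by (simp add: distrib_right)
            thus ?thesis using \<open>(norm c + 1) * \<delta> = \<epsilon> * cm\<close> by simp
          qed
          ultimately show ?thesis by linarith
        qed
        finally have "cm * norm (z t) < \<epsilon> * cm" .
        hence "norm (z t) < \<epsilon>" using cm by (simp add: mult.commute)
        thus "norm (z t - 0) < \<epsilon>" by simp
      qed (rule d)
    qed
  next
    show "global_attractor_in ?X Dprime Dprime 0"
      unfolding global_attractor_in_def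
    proof (intro allI impI)
      fix I z assume H: "filippov_solution ?X Dprime I z \<and> {0..} \<subseteq> I \<and> z 0 \<in> Dprime"
      hence sol: "filippov_solution ?X Dprime I z" and sub: "{0..} \<subseteq> I" by auto
      have zD: "\<And>t. t \<in> I \<Longrightarrow> z t \<in> Dprime" using sol by (auto simp: filippov_solution_def)
      let ?W = "\<lambda>t. inner c (z t)"
      have Wlim: "(?W \<longlongrightarrow> 0) at_top"
      proof (rule tendstoI)
        fix e :: real assume e: "e > 0"
        have "\<exists>t0\<ge>0. ?W t0 < e"
        proof (rule ccontr)
          assume "\<not> (\<exists>t0\<ge>0. ?W t0 < e)"
          hence ge: "\<And>t. t \<ge> 0 \<Longrightarrow> e \<le> ?W t" by force
          define T where "T = ?W 0 / (lm * e) + 1"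
          have W0: "?W 0 \<ge> 0" using Wnn zD sub by auto
          have T: "T \<ge> 0" using W0 lm e by (simp add: T_def add_nonneg_pos)
          have "?W T + (lm * e) * T \<le> ?W 0 + (lm * e) * 0"
          proof (rule sol_mono[OF sol fb])
            show "is_interval {0::real..}" by (simp add: is_interval_ci)
            show "{0..} \<subseteq> I" by (rule sub)
            show "\<And>t. t \<in> {0..} \<Longrightarrow> lm * e \<le> lm * ?W t" using ge lm by (auto intro: mult_left_mono)
          qed (use T in auto)
          moreover have "(lm * e) * T = ?W 0 + lm * e" using lm e by (simp add: T_def distrib_left)
          moreover have "?W T \<ge> e" using ge T by blast
          ultimately show False using lm e by (smt (verit) mult_pos_pos)
        qed
        then obtain t0 where t0: "t0 \<ge> 0" "?W t0 < e" by blast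
        show "\<forall>\<^sub>F t in at_top. dist (?W t) 0 < e"
          unfolding eventually_at_top_linorder
        proof (intro exI allI impI)
          fix t assume tt: "t \<ge> t0"
          have "t0 \<in> {0..}" "t \<in> {0..}" using t0(1) tt by simp_all
          hence tI: "t0 \<in> I" "t \<in> I" using sub by (blast, blast)
          have "?W t \<le> ?W t0" using nonincr[OF sol tI tt] .
          moreover have "?W t \<ge> 0" using Wnn[OF zD[OF tI(2)]] .
          ultimately show "dist (?W t) 0 < e" using t0 by (simp add: dist_real_def)
        qed
      qed
      have "((\<lambda>t. ?W t / cm) \<longlongrightarrow> 0) at_top"
        using Wlim by (rule tendsto_divide_zero)
      moreover have "\<forall>\<^sub>F t in at_top. norm (z t) \<le> ?W t / cm"
        unfolding eventually_at_top_linorder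
      proof (intro exI allI impI)
        fix t :: real assume "t \<ge> 0"
        hence "t \<in> {0..}" by simp
        hence "z t \<in> Dprime" using zD sub by blast
        hence "cm * norm (z t) \<le> ?W t" by (rule Wlow)
        thus "norm (z t) \<le> ?W t / cm" using cm by (simp add: pos_le_divide_eq mult.commute)
      qed
      ultimately show "(z \<longlongrightarrow> 0) at_top" by (intro Lim_null_comparison[of z]) (simp_all only:)
    qed
  qed
qed

end
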